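(* Let $D,E$ be $\mathcal{G}$-spaces and $L>0$. The mapping which takes $(\psi,x_1,x_2)\in\mathcal{G}(L,\ell_1+\ell_2)\times D(\ell_1)\times E(\ell_2)$ to the equivalence class of $(\psi_2\otimes\psi_1,x_2,x_1)$ in $(E\otimes D)(L)$, where $\psi=\psi_1\otimes\psi_2$ is the unique decomposition with $\psi_i\in\mathcal{G}(\ell'_i,\ell_i)$ and $\ell'_1+\ell'_2=L$, induces a continuous map $B:(D\otimes E)(L)\to(E\otimes D)(L)$ which is a homeomorphism. This family of homeomorphisms is not natural with respect to $L>0$.
   Context: $\mathcal{G}$ is the category whose objects are the real numbers $\ell>0$, with $\mathcal{G}(\ell_1,\ell_2)$ the set of nondecreasing homeomorphisms $[0,\ell_1]\to[0,\ell_2]$, equipped with the compact-open topology, composition given by composition of maps. For $\phi_i:[0,\ell_i]\to[0,\ell'_i]$, $\phi_1\otimes\phi_2:[0,\ell_1+\ell_2]\to[0,\ell'_1+\ell'_2]$ is $\phi_1(t)$ for $0\le t\le\ell_1$ and $\phi_2(t-\ell_1)+\ell'_1$ for $\ell_1\le t\le\ell_1+\ell_2$. Every $\psi\in\mathcal{G}(L,\ell_1+\ell_2)$ decomposes uniquely as $\psi_1\otimes\psi_2$ as described. All spaces are ($\Delta$-generated) topological spaces. A $\mathcal{G}$-space is an enriched (continuous) functor $D:\mathcal{G}^{op}\to\mathbf{Top}$; write $x\phi=D(\phi)(x)$. The tensor product $D\otimes E=\int^{(\ell_1,\ell_2)}\mathcal{G}(-,\ell_1+\ell_2)\times D(\ell_1)\times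 E(\ell_2)$; concretely $(D\otimes E)(L)$ is the quotient of $\bigsqcup_{(\ell_1,\ell_2)}\mathcal{G}(L,\ell_1+\ell_2)\times D(\ell_1)\times E(\ell_2)$ by the identifications $(\psi,x_1\phi_1,x_2\phi_2)\sim((\phi_1\otimes\phi_2)\psi,x_1,x_2)$, and a map $\omega:L'\to L$ acts by $(\psi,x_1,x_2)\mapsto(\psi\omega,x_1,x_2)$. Naturality in $L$ would mean compatibility of $B$ with these actions of $\mathcal{G}$ on $D\otimes E$ and $E\otimes D$. *)

theory Defs
  imports "HOL-Analysis.Analysis" "HOL-Homology.Simplices"
begin

definition simplex_top :: "nat \<Rightarrow> (nat \<Rightarrow> real) topology" where
  "simplex_top n = subtopology (powertop_real UNIV) (standard_simplex n)"

definition dgen :: "'a topology \<Rightarrow> 'a topology" where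
  "dgen X = topology (\<lambda>U. U \<subseteq> topspace X \<and>
      (\<forall>n \<sigma>. continuous_map (simplex_top n) X \<sigma> \<longrightarrow>
          openin (simplex_top n) {t \<in> topspace (simplex_top n). \<sigma> t \<in> U}))"

definition delta_generated :: "'a topology \<Rightarrow> bool" where
  "delta_generated X \<longleftrightarrow> dgen X = X"

definition dprod :: "'a topology \<Rightarrow> 'b topology \<Rightarrow> ('a \<times> 'b) topology" where
  "dprod X Y = dgen (prod_topology X Y)"

definition quotient_topology :: "'a topology \<Rightarrow> ('a \<Rightarrow> 'b) \<Rightarrow> 'b topology" where
  "quotient_topology X f = topology (\<lambda>U. U \<subseteq> f ` topspace X \<and>
      openin X {x \<in> topspace X. f x \<in> U})"

text \<open>Morphisms l1 -> l2: nondecreasing homeomorphisms [0,l1] -> [0,l2],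
 represented as functions extensional on [0,l1].\<close>
definition Gset :: "real \<Rightarrow> real \<Rightarrow> (real \<Rightarrow> real) set" where
  "Gset l1 l2 = {f. f \<in> extensional {0..l1} \<and> mono_on {0..l1} f \<and>
      homeomorphic_map (subtopology euclideanreal {0..l1}) (subtopology euclideanreal {0..l2}) f}"

text \<open>Compact-open topology (Delta-ified, as all spaces are Delta-generated).\<close>
definition Gtop :: "real \<Rightarrow> real \<Rightarrow> (real \<Rightarrow> real) topology" where
  "Gtop l1 l2 = dgen (subtopology
      (topology_generated_by {{f. f ` K \<subseteq> U} | K U. compact K \<and> K \<subseteq> {0..l1} \<and> open U})
      (Gset l1 l2))"

definition Gid :: "real \<Rightarrow> real \<Rightarrow> real" where
  "Gid l = restrict id {0..l}"

definition Gcomp :: "real \<Rightarrow> (real \<Rightarrow> real) \<Rightarrow> (real \<Rightarrow> real) \<Rightarrow> real \<Rightarrow> real" where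
  "Gcomp l0 \<phi> \<psi> = restrict (\<phi> \<circ> \<psi>) {0..l0}"

definition Gtens :: "real \<Rightarrow> real \<Rightarrow> real \<Rightarrow> (real \<Rightarrow> real) \<Rightarrow> (real \<Rightarrow> real) \<Rightarrow> real \<Rightarrow> real" where
  "Gtens a1 a2 b1 \<phi>1 \<phi>2 = restrict (\<lambda>t. if t \<le> a1 then \<phi>1 t else \<phi>2 (t - a1) + b1) {0..a1+a2}"

text \<open>Decomposition \<psi> = \<psi>1 \<otimes> \<psi>2 of \<psi> : [0,L] -> [0,l1+l2]:
 split point s = \<psi>^{-1}(l1), \<psi>1 : [0,s] -> [0,l1], \<psi>2 : [0,L-s] -> [0,l2].\<close>
definition Gsplit_pt :: "real \<Rightarrow> real \<Rightarrow> (real \<Rightarrow> real) \<Rightarrow> real" where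
  "Gsplit_pt L l1 \<psi> = (THE s. s \<in> {0..L} \<and> \<psi> s = l1)"

definition Gsplit1 :: "real \<Rightarrow> real \<Rightarrow> (real \<Rightarrow> real) \<Rightarrow> real \<Rightarrow> real" where
  "Gsplit1 L l1 \<psi> = restrict \<psi> {0..Gsplit_pt L l1 \<psi>}"

definition Gsplit2 :: "real \<Rightarrow> real \<Rightarrow> (real \<Rightarrow> real) \<Rightarrow> real \<Rightarrow> real" where
  "Gsplit2 L l1 \<psi> = restrict (\<lambda>t. \<psi> (t + Gsplit_pt L l1 \<psi>) - l1) {0..L - Gsplit_pt L l1 \<psi>}"

text \<open>A G-space: spaces D(l) for l > 0 and actions D(\<phi>) : D(l2) -> D(l1) for
 \<phi> \<in> G(l1,l2), written gact D l1 l2 \<phi> x = x\<phi>.\<close>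
record 'a gspace =
  gsp :: "real \<Rightarrow> 'a topology"
  gact :: "real \<Rightarrow> real \<Rightarrow> (real \<Rightarrow> real) \<Rightarrow> 'a \<Rightarrow> 'a"

definition G_space :: "'a gspace \<Rightarrow> bool" where
  "G_space D \<longleftrightarrow>
     (\<forall>l>0. delta_generated (gsp D l)) \<and>
     (\<forall>l1>0. \<forall>l2>0. continuous_map (dprod (Gtop l1 l2) (gsp D l2)) (gsp D l1)
                        (\<lambda>(\<phi>, x). gact D l1 l2 \<phi> x)) \<and>
     (\<forall>l>0. \<forall>x\<in>topspace (gsp D l). gact D l l (Gid l) x = x) \<and>
     (\<forall>l0>0. \<forall>l1>0. \<forall>l2>0. \<forall>\<psi>\<in>Gset l0 l1. \<forall>\<phi>\<in>Gset l1 l2. \<forall>x\<in>topspace (gsp D l2).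
        gact D l0 l2 (Gcomp l0 \<phi> \<psi>) x = gact D l0 l1 \<psi> (gact D l1 l2 \<phi> x))"

definition tens_index :: "(real \<times> real) set" where
  "tens_index = {p. 0 < fst p \<and> 0 < snd p}"

definition tens_sum :: "'a gspace \<Rightarrow> 'b gspace \<Rightarrow> real \<Rightarrow>
    ((real \<times> real) \<times> (real \<Rightarrow> real) \<times> 'a \<times> 'b) topology" where
  "tens_sum D E L = sum_topology
     (\<lambda>(l1, l2). dprod (Gtop L (l1 + l2)) (dprod (gsp D l1) (gsp E l2))) tens_index"

definition tens_gen :: "'a gspace \<Rightarrow> 'b gspace \<Rightarrow> real \<Rightarrow>
    ((real \<times> real) \<times> (real \<Rightarrow> real) \<times> 'a \<times> 'b) \<Rightarrow>
    ((real \<times> real) \<times> (real \<Rightarrow> real) \<times> 'a \<times> 'b) \<Rightarrow> bool" where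
  "tens_gen D E L r r' \<longleftrightarrow>
    (\<exists>l1 l2 m1 m2 \<psi> \<phi>1 \<phi>2 x1 x2.
       0 < l1 \<and> 0 < l2 \<and> 0 < m1 \<and> 0 < m2 \<and>
       \<psi> \<in> Gset L (l1 + l2) \<and> \<phi>1 \<in> Gset l1 m1 \<and> \<phi>2 \<in> Gset l2 m2 \<and>
       x1 \<in> topspace (gsp D m1) \<and> x2 \<in> topspace (gsp E m2) \<and>
       r = ((l1, l2), \<psi>, gact D l1 m1 \<phi>1 x1, gact E l2 m2 \<phi>2 x2) \<and>
       r' = ((m1, m2), Gcomp L (Gtens l1 l2 m1 \<phi>1 \<phi>2) \<psi>, x1, x2))"

definition tens_cls :: "'a gspace \<Rightarrow> 'b gspace \<Rightarrow> real \<Rightarrow>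
    ((real \<times> real) \<times> (real \<Rightarrow> real) \<times> 'a \<times> 'b) \<Rightarrow>
    ((real \<times> real) \<times> (real \<Rightarrow> real) \<times> 'a \<times> 'b) set" where
  "tens_cls D E L r = {r'. equivclp (tens_gen D E L) r r'}"

definition tens_top :: "'a gspace \<Rightarrow> 'b gspace \<Rightarrow> real \<Rightarrow>
    ((real \<times> real) \<times> (real \<Rightarrow> real) \<times> 'a \<times> 'b) set topology" where
  "tens_top D E L = quotient_topology (tens_sum D E L) (tens_cls D E L)"

definition tens_act :: "'a gspace \<Rightarrow> 'b gspace \<Rightarrow> real \<Rightarrow> (real \<Rightarrow> real) \<Rightarrow>
    ((real \<times> real) \<times> (real \<Rightarrow> real) \<times> 'a \<times> 'b) set \<Rightarrow>
    ((real \<times> real) \<times> (real \<Rightarrow> real) \<times> 'a \<times> 'b) set" where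
  "tens_act D E L' \<omega> c =
     the_elem ((\<lambda>((l1, l2), \<psi>, x1, x2). tens_cls D E L' ((l1, l2), Gcomp L' \<psi> \<omega>, x1, x2)) ` c)"

definition tens_swap :: "real \<Rightarrow> ((real \<times> real) \<times> (real \<Rightarrow> real) \<times> 'a \<times> 'b) \<Rightarrow>
    ((real \<times> real) \<times> (real \<Rightarrow> real) \<times> 'b \<times> 'a)" where
  "tens_swap L r = (case r of ((l1, l2), \<psi>, x1, x2) \<Rightarrow>
      ((l2, l1),
       Gtens (L - Gsplit_pt L l1 \<psi>) (Gsplit_pt L l1 \<psi>) l2 (Gsplit2 L l1 \<psi>) (Gsplit1 L l1 \<psi>),
       x2, x1))"

definition braid :: "'a gspace \<Rightarrow> 'b gspace \<Rightarrow> real \<Rightarrow>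
    ((real \<times> real) \<times> (real \<Rightarrow> real) \<times> 'a \<times> 'b) set \<Rightarrow>
    ((real \<times> real) \<times> (real \<Rightarrow> real) \<times> 'b \<times> 'a) set" where
  "braid D E L c = the_elem ((\<lambda>r. tens_cls E D L (tens_swap L r)) ` c)"

definition braid_natural :: "'a gspace \<Rightarrow> 'b gspace \<Rightarrow> bool" where
  "braid_natural D E \<longleftrightarrow>
     (\<forall>L>0. \<forall>L'>0. \<forall>\<omega>\<in>Gset L' L. \<forall>c\<in>topspace (tens_top D E L).
        braid D E L' (tens_act D E L' \<omega> c) = tens_act E D L' \<omega> (braid D E L c))"

end

theory Submission
  imports Defs
begin


lemma gset_iff:
  assumes "0 < a" "0 < b"
  shows "f \<in> Gset a b \<longleftrightarrow> f \<in> extensional {0..a} \<and> continuous_on {0..a} f \<and>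
     strict_mono_on {0..a} f \<and> f 0 = 0 \<and> f a = b"
proof
  assume f: "f \<in> Gset a b"
  then have ext: "f \<in> extensional {0..a}" and mo: "mono_on {0..a} f"
    and h: "homeomorphic_map (top_of_set {0..a}) (top_of_set {0..b}) f"
    by (auto simp: Gset_def)
  have cont: "continuous_on {0..a} f" and maps: "f \<in> {0..a} \<rightarrow> {0..b}"
    using homeomorphic_imp_continuous_map[OF h] by auto
  have surj: "f ` {0..a} = {0..b}" using homeomorphic_imp_surjective_map[OF h] by simp
  have inj: "inj_on f {0..a}" using homeomorphic_imp_injective_map[OF h] by simp
  have sm: "strict_mono_on {0..a} f"
    unfolding strict_mono_on_def
  proof (intro allI impI)
    fix r s assume "r \<in> {0..a} \<and> s \<in> {0..a} \<and> r < s"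
    then have "f r \<le> f s" "f r \<noteq> f s" using mo inj unfolding mono_on_def inj_on_def
      by (meson order_less_imp_le, metis order_less_irrefl)
    then show "f r < f s" by simp
  qed
  have "0 \<in> f ` {0..a}" using surj assms by auto
  then obtain t where t: "t \<in> {0..a}" "f t = 0" by auto
  have "f 0 \<le> f t" by (rule mono_onD[OF mo]) (use t assms in auto)
  moreover have "f 0 \<ge> 0" using maps assms by auto
  ultimately have f0: "f 0 = 0" using t by auto
  have "b \<in> f ` {0..a}" using surj assms by auto
  then obtain u where u: "u \<in> {0..a}" "f u = b" by auto
  have "f u \<le> f a" by (rule mono_onD[OF mo]) (use u assms in auto)
  moreover have "f a \<le> b" using maps assms by auto
  ultimately have fa: "f a = b" using u by auto
  show "f \<in> extensional {0..a} \<and> continuous_on {0..a} f \<and>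
     strict_mono_on {0..a} f \<and> f 0 = 0 \<and> f a = b"
    using ext cont sm f0 fa by auto
next
  assume H: "f \<in> extensional {0..a} \<and> continuous_on {0..a} f \<and>
     strict_mono_on {0..a} f \<and> f 0 = 0 \<and> f a = b"
  then have ext: "f \<in> extensional {0..a}" and cont: "continuous_on {0..a} f"
    and sm: "strict_mono_on {0..a} f" and f0: "f 0 = 0" and fa: "f a = b" by auto
  have mo: "mono_on {0..a} f" using sm by (rule strict_mono_on_imp_mono_on)
  have maps: "f ` {0..a} \<subseteq> {0..b}"
  proof
    fix y assume "y \<in> f ` {0..a}"
    then obtain t where t: "t \<in> {0..a}" "y = f t" by auto
    have "f 0 \<le> f t" "f t \<le> f a" by (rule mono_onD[OF mo]; use t assms in auto)+
    then show "y \<in> {0..b}" using t f0 fa by auto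
  qed
  have "{0..b} \<subseteq> f ` {0..a}"
  proof
    fix y assume y: "y \<in> {0..b}"
    have "\<exists>x\<ge>0. x \<le> a \<and> f x = y"
      by (rule IVT') (use y f0 fa assms cont in auto)
    then show "y \<in> f ` {0..a}" by auto
  qed
  with maps have surj: "f ` {0..a} = {0..b}" by auto
  have inj: "inj_on f {0..a}"
    using sm by (rule strict_mono_on_imp_inj_on)
  have "homeomorphic_map (top_of_set {0..a}) (top_of_set {0..b}) f"
    apply (rule continuous_imp_homeomorphic_map)
    using cont maps surj inj
    by (auto simp: compact_space_subtopology Hausdorff_space_subtopology)
  then show "f \<in> Gset a b" using ext mo by (auto simp: Gset_def)
qed



lemma gsetD:
  assumes "f \<in> Gset a b" "0 < a" "0 < b"
  shows "f \<in> extensional {0..a}" "continuous_on {0..a} f" "strict_mono_on {0..a} f"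
    "f 0 = 0" "f a = b"
  using assms gset_iff by blast+

lemma gset_less_iff:
  assumes "f \<in> Gset a b" "0 < a" "0 < b" "t \<in> {0..a}" "u \<in> {0..a}"
  shows "f t < f u \<longleftrightarrow> t < u"
proof -
  have sm: "strict_mono_on {0..a} f" using gsetD[OF assms(1-3)] by blast
  show ?thesis
  proof
    assume "f t < f u"
    show "t < u"
    proof (rule ccontr)
      assume "\<not> t < u"
      then have "u < t \<or> u = t" by auto
      then show False
      proof
        assume "u < t" then have "f u < f t" using sm assms(4,5) unfolding strict_mono_on_def by blast
        then show False using \<open>f t < f u\<close> by simp
      next
        assume "u = t" then show False using \<open>f t < f u\<close> by simp
      qed
    qed
  next
    assume "t < u" then show "f t < f u" using sm assms(4,5) unfolding strict_mono_on_def by blast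
  qed
qed

lemma gset_le_iff:
  assumes "f \<in> Gset a b" "0 < a" "0 < b" "t \<in> {0..a}" "u \<in> {0..a}"
  shows "f t \<le> f u \<longleftrightarrow> t \<le> u"
  using gset_less_iff[OF assms(1-3) assms(5) assms(4)] by (simp add: not_less[symmetric])

lemma gset_eq_iff:
  assumes "f \<in> Gset a b" "0 < a" "0 < b" "t \<in> {0..a}" "u \<in> {0..a}"
  shows "f t = f u \<longleftrightarrow> t = u"
  using gset_le_iff[OF assms] gset_le_iff[OF assms(1-3) assms(5) assms(4)] by auto

lemma gset_range:
  assumes "f \<in> Gset a b" "0 < a" "0 < b" "t \<in> {0..a}"
  shows "0 \<le> f t" "f t \<le> b"
proof -
  have "f 0 \<le> f t" "f t \<le> f a" using gset_le_iff[OF assms(1-3)] assms(2,4) by auto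
  then show "0 \<le> f t" "f t \<le> b" using gsetD[OF assms(1-3)] by auto
qed

lemma gset_surj:
  assumes "f \<in> Gset a b" "0 < a" "0 < b" "y \<in> {0..b}"
  shows "\<exists>t\<in>{0..a}. f t = y"
proof -
  have "\<exists>x\<ge>0. x \<le> a \<and> f x = y"
    by (rule IVT') (use assms gsetD[OF assms(1-3)] in auto)
  then show ?thesis by auto
qed

lemma split_pt_eq:
  assumes "f \<in> Gset a b" "0 < a" "0 < b" "s \<in> {0..a}" "f s = c"
  shows "Gsplit_pt a c f = s"
  unfolding Gsplit_pt_def
  by (rule the_equality) (use assms gset_eq_iff[OF assms(1-3)] in auto)

lemma split_pt:
  assumes "f \<in> Gset a b" "0 < a" "0 < b" "c \<in> {0..b}"
  shows "Gsplit_pt a c f \<in> {0..a}" "f (Gsplit_pt a c f) = c"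
proof -
  obtain t where t: "t \<in> {0..a}" "f t = c" using gset_surj[OF assms] by auto
  then have "Gsplit_pt a c f = t" using split_pt_eq[OF assms(1-3)] by auto
  then show "Gsplit_pt a c f \<in> {0..a}" "f (Gsplit_pt a c f) = c" using t by auto
qed

lemma split_pt_strict:
  assumes "f \<in> Gset a b" "0 < a" "0 < b" "0 < c" "c < b"
  shows "0 < Gsplit_pt a c f" "Gsplit_pt a c f < a"
proof -
  have s: "Gsplit_pt a c f \<in> {0..a}" "f (Gsplit_pt a c f) = c" using split_pt[OF assms(1-3)] assms by auto
  have "Gsplit_pt a c f \<noteq> 0" using s gsetD[OF assms(1-3)] assms by auto
  moreover have "Gsplit_pt a c f \<noteq> a" using s gsetD[OF assms(1-3)] assms by auto
  ultimately show "0 < Gsplit_pt a c f" "Gsplit_pt a c f < a" using s by auto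
qed

lemma Gcomp_val: "t \<in> {0..a} \<Longrightarrow> Gcomp a g f t = g (f t)"
  by (simp add: Gcomp_def)

lemma Gtens_val: "t \<in> {0..a1+a2} \<Longrightarrow>
   Gtens a1 a2 b1 f1 f2 t = (if t \<le> a1 then f1 t else f2 (t - a1) + b1)"
  by (simp add: Gtens_def)

lemma Gcomp_gset:
  assumes "f \<in> Gset a b" "g \<in> Gset b c" "0 < a" "0 < b" "0 < c"
  shows "Gcomp a g f \<in> Gset a c"
proof -
  note F = gsetD[OF assms(1,3,4)] and G = gsetD[OF assms(2,4,5)]
  have r: "\<And>t. t \<in> {0..a} \<Longrightarrow> f t \<in> {0..b}" using gset_range[OF assms(1,3,4)] by auto
  have "continuous_on {0..a} (g \<circ> f)"
    by (rule continuous_on_compose) (use F G r continuous_on_subset in \<open>auto intro: continuous_on_subset[OF G(2)]\<close>)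
  then have c: "continuous_on {0..a} (Gcomp a g f)"
    by (rule continuous_on_cong[THEN iffD1, rotated 2]) (auto simp: Gcomp_val)
  have sm: "strict_mono_on {0..a} (Gcomp a g f)"
    unfolding strict_mono_on_def
  proof (intro allI impI)
    fix r s assume h: "r \<in> {0..a} \<and> s \<in> {0..a} \<and> r < s"
    then have "f r < f s" using gset_less_iff[OF assms(1,3,4)] by auto
    then have "g (f r) < g (f s)" using gset_less_iff[OF assms(2,4,5)] r h by auto
    then show "Gcomp a g f r < Gcomp a g f s" using h by (simp add: Gcomp_val)
  qed
  show ?thesis
    unfolding gset_iff[OF assms(3,5)]
    using c sm F G assms by (auto simp: Gcomp_val Gcomp_def)
qed

lemma Gid_gset: "0 < a \<Longrightarrow> Gid a \<in> Gset a a"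
  unfolding gset_iff[of a a] Gid_def
  by (auto simp: strict_mono_on_def intro!: continuous_on_cong[THEN iffD1, OF refl _ continuous_on_id])

lemma Gtens_gset:
  assumes "f1 \<in> Gset a1 b1" "f2 \<in> Gset a2 b2" "0 < a1" "0 < b1" "0 < a2" "0 < b2"
  shows "Gtens a1 a2 b1 f1 f2 \<in> Gset (a1 + a2) (b1 + b2)"
proof -
  note F1 = gsetD[OF assms(1,3,4)] and F2 = gsetD[OF assms(2,5,6)]
  have "continuous_on {0..a1+a2} (\<lambda>t. if t \<le> a1 then f1 t else f2 (t - a1) + b1)"
  proof (rule continuous_on_cases_le)
    show "continuous_on {t \<in> {0..a1 + a2}. t \<le> a1} f1"
      by (rule continuous_on_subset[OF F1(2)]) auto
    have "continuous_on {t \<in> {0..a1 + a2}. a1 \<le> t} (f2 \<circ> (\<lambda>t. t - a1))"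
      by (rule continuous_on_compose) (auto intro!: continuous_intros intro: continuous_on_subset[OF F2(2)])
    then show "continuous_on {t \<in> {0..a1 + a2}. a1 \<le> t} (\<lambda>t. f2 (t - a1) + b1)"
      by (auto intro!: continuous_intros simp: o_def)
    show "\<And>t. t \<in> {0..a1 + a2} \<Longrightarrow> t = a1 \<Longrightarrow> f1 t = f2 (t - a1) + b1"
      using F1 F2 by auto
  qed (auto intro: continuous_intros)
  then have c: "continuous_on {0..a1+a2} (Gtens a1 a2 b1 f1 f2)"
    by (rule continuous_on_cong[THEN iffD1, rotated 2]) (auto simp: Gtens_val)
  have sm: "strict_mono_on {0..a1+a2} (Gtens a1 a2 b1 f1 f2)"
    unfolding strict_mono_on_def
  proof (intro allI impI)
    fix r s assume h: "r \<in> {0..a1+a2} \<and> s \<in> {0..a1+a2} \<and> r < s"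
    show "Gtens a1 a2 b1 f1 f2 r < Gtens a1 a2 b1 f1 f2 s"
    proof (cases "s \<le> a1")
      case True
      then have "f1 r < f1 s" using gset_less_iff[OF assms(1,3,4)] h by auto
      then show ?thesis using h True by (simp add: Gtens_val)
    next
      case False
      note sF = False
      show ?thesis
      proof (cases "r \<le> a1")
        case True
        have "f1 r \<le> b1" using gset_range[OF assms(1,3,4)] h True by auto
        moreover have "0 < f2 (s - a1)" using gset_less_iff[OF assms(2,5,6), of 0 "s - a1"] h sF F2 by auto
        ultimately show ?thesis using h True sF by (simp add: Gtens_val)
      next
        case False
        then have "f2 (r - a1) < f2 (s - a1)" using gset_less_iff[OF assms(2,5,6)] h by auto
        then show ?thesis using h False sF by (simp add: Gtens_val)
      qed
    qed
  qed
  show ?thesis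
    unfolding gset_iff[OF add_pos_pos[OF assms(3,5)] add_pos_pos[OF assms(4,6)]]
    using c sm F1 F2 assms by (auto simp: Gtens_val Gtens_def)
qed



definition SW :: "real \<Rightarrow> real \<Rightarrow> real \<Rightarrow> (real \<Rightarrow> real) \<Rightarrow> real \<Rightarrow> real" where
  "SW L l1 l2 f = Gtens (L - Gsplit_pt L l1 f) (Gsplit_pt L l1 f) l2 (Gsplit2 L l1 f) (Gsplit1 L l1 f)"

lemma tens_swap_eq: "tens_swap L ((l1, l2), f, x1, x2) = ((l2, l1), SW L l1 l2 f, x2, x1)"
  by (simp add: tens_swap_def SW_def)

locale splitctx =
  fixes L l1 l2 :: real and f :: "real \<Rightarrow> real"
  assumes f: "f \<in> Gset L (l1 + l2)" and L: "0 < L" and l1: "0 < l1" and l2: "0 < l2"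
begin

definition "s = Gsplit_pt L l1 f"

lemma b: "0 < l1 + l2" using l1 l2 by simp

lemma s: "0 < s" "s < L" "f s = l1"
  using split_pt_strict[OF f L b] split_pt[OF f L b] l1 l2 unfolding s_def by auto

lemmas F = gsetD[OF f L b]

lemma sw_val: "t \<in> {0..L} \<Longrightarrow>
   SW L l1 l2 f t = (if t \<le> L - s then f (t + s) - l1 else f (t - (L - s)) + l2)"
  using s by (simp add: SW_def Gtens_val Gsplit1_def Gsplit2_def s_def[symmetric])

lemma split1_gset: "Gsplit1 L l1 f \<in> Gset s l1"
proof -
  have c: "continuous_on {0..s} (Gsplit1 L l1 f)"
    by (rule continuous_on_cong[THEN iffD1, OF refl _ continuous_on_subset[OF F(2)]])
       (use s in \<open>auto simp: Gsplit1_def s_def\<close>)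
  have "strict_mono_on {0..s} (Gsplit1 L l1 f)"
    unfolding strict_mono_on_def
    using gset_less_iff[OF f L b] s by (auto simp: Gsplit1_def s_def[symmetric])
  then show ?thesis unfolding gset_iff[OF s(1) l1]
    using c s F by (auto simp: Gsplit1_def s_def[symmetric])
qed

lemma split2_gset: "Gsplit2 L l1 f \<in> Gset (L - s) l2"
proof -
  have "continuous_on {0..L - s} (\<lambda>t. f (t + s) - l1)"
  proof -
    have "continuous_on {0..L - s} (f \<circ> (\<lambda>t. t + s))"
      by (rule continuous_on_compose) (use s in \<open>auto intro!: continuous_intros intro: continuous_on_subset[OF F(2)]\<close>)
    then show ?thesis by (auto intro!: continuous_intros simp: o_def)
  qed
  then have c: "continuous_on {0..L - s} (Gsplit2 L l1 f)"
    by (rule continuous_on_cong[THEN iffD1, rotated 2]) (auto simp: Gsplit2_def s_def)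
  have "strict_mono_on {0..L - s} (Gsplit2 L l1 f)"
    unfolding strict_mono_on_def
    using gset_less_iff[OF f L b] s by (auto simp: Gsplit2_def s_def[symmetric])
  moreover have Ls: "0 < L - s" using s by simp
  ultimately show ?thesis unfolding gset_iff[OF Ls l2]
    using c s F by (auto simp: Gsplit2_def s_def[symmetric])
qed

lemma sw_gset: "SW L l1 l2 f \<in> Gset L (l2 + l1)"
  using Gtens_gset[OF split2_gset split1_gset _ l2 s(1) l1] s
  by (simp add: SW_def s_def[symmetric])

lemma tens_split: "Gtens s (L - s) l1 (Gsplit1 L l1 f) (Gsplit2 L l1 f) = f"
proof (rule extensionalityI[of _ "{0..L}"])
  show "Gtens s (L - s) l1 (Gsplit1 L l1 f) (Gsplit2 L l1 f) \<in> extensional {0..L}"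
    by (simp add: Gtens_def)
  show "f \<in> extensional {0..L}" using F by simp
  fix t assume "t \<in> {0..L}"
  then show "Gtens s (L - s) l1 (Gsplit1 L l1 f) (Gsplit2 L l1 f) t = f t"
    using s by (auto simp: Gtens_val Gsplit1_def Gsplit2_def s_def[symmetric])
qed

lemma sw_split: "Gsplit_pt L l2 (SW L l1 l2 f) = L - s"
  by (rule split_pt_eq[OF sw_gset L]) (use s l1 l2 F in \<open>auto simp: sw_val\<close>)

lemma sw_sw: "SW L l2 l1 (SW L l1 l2 f) = f"
proof -
  interpret g: splitctx L l2 l1 "SW L l1 l2 f"
    by unfold_locales (use sw_gset L l1 l2 in auto)
  have gs: "g.s = L - s" using sw_split g.s_def by simp
  show ?thesis
  proof (rule extensionalityI[of _ "{0..L}"])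
    show "SW L l2 l1 (SW L l1 l2 f) \<in> extensional {0..L}" using g.sw_gset gsetD(1) L l1 l2 by auto
    show "f \<in> extensional {0..L}" using F by simp
    fix t assume t: "t \<in> {0..L}"
    show "SW L l2 l1 (SW L l1 l2 f) t = f t"
    proof (cases "t \<le> s")
      case True
      have e: "L - g.s = s" using gs by simp
      show ?thesis
      proof (cases "t = 0")
        case True
        then show ?thesis using t e gs s F by (simp add: g.sw_val sw_val)
      next
        case False
        then show ?thesis using t e gs s F \<open>t \<le> s\<close> by (simp add: g.sw_val sw_val)
      qed
    next
      case False
      then show ?thesis using t gs s F by (simp add: g.sw_val sw_val)
    qed
  qed
qed

end

lemma wd:
  assumes f: "f \<in> Gset L (l1 + l2)" and g1: "g1 \<in> Gset l1 m1" and g2: "g2 \<in> Gset l2 m2"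
    and pos: "0 < L" "0 < l1" "0 < l2" "0 < m1" "0 < m2"
  defines "h \<equiv> Gcomp L (Gtens l1 l2 m1 g1 g2) f"
  shows "h \<in> Gset L (m1 + m2)" "Gsplit_pt L m1 h = Gsplit_pt L l1 f"
    "SW L m1 m2 h = Gcomp L (Gtens l2 l1 m2 g2 g1) (SW L l1 l2 f)"
proof -
  interpret a: splitctx L l1 l2 f by unfold_locales (use assms in auto)
  have T: "Gtens l1 l2 m1 g1 g2 \<in> Gset (l1 + l2) (m1 + m2)"
    using Gtens_gset[OF g1 g2] pos by auto
  show hG: "h \<in> Gset L (m1 + m2)" unfolding h_def
    by (rule Gcomp_gset[OF f T]) (use pos in auto)
  note G1 = gsetD[OF g1 pos(2,4)] and G2 = gsetD[OF g2 pos(3,5)]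
  have "h a.s = m1" using a.s G1 pos by (simp add: h_def Gcomp_val Gtens_val)
  then show hs: "Gsplit_pt L m1 h = Gsplit_pt L l1 f"
    using split_pt_eq[OF hG pos(1)] a.s pos a.s_def by auto
  interpret b: splitctx L m1 m2 h by unfold_locales (use hG pos in auto)
  have bs: "b.s = a.s" using hs b.s_def a.s_def by simp
  show "SW L m1 m2 h = Gcomp L (Gtens l2 l1 m2 g2 g1) (SW L l1 l2 f)"
  proof (rule extensionalityI[of _ "{0..L}"])
    show "SW L m1 m2 h \<in> extensional {0..L}" using b.sw_gset gsetD(1) pos by auto
    show "Gcomp L (Gtens l2 l1 m2 g2 g1) (SW L l1 l2 f) \<in> extensional {0..L}"
      by (simp add: Gcomp_def)
    fix t assume t: "t \<in> {0..L}"
    have e1: "SW L m1 m2 h t = (if t \<le> L - a.s then h (t + a.s) - m1 else h (t - (L - a.s)) + m2)"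
      using b.sw_val[OF t] bs by simp
    have e2: "Gcomp L (Gtens l2 l1 m2 g2 g1) (SW L l1 l2 f) t = Gtens l2 l1 m2 g2 g1 (SW L l1 l2 f t)"
      by (rule Gcomp_val[OF t])
    note e3 = a.sw_val[OF t]
    show "SW L m1 m2 h t = Gcomp L (Gtens l2 l1 m2 g2 g1) (SW L l1 l2 f) t"
    proof (cases "t \<le> L - a.s")
      case True
      have u: "t + a.s \<in> {0..L}" using t True a.s by auto
      have r: "l1 \<le> f (t + a.s)" "f (t + a.s) \<le> l1 + l2"
        using gset_le_iff[OF f pos(1) a.b, of a.s "t + a.s"] a.s u t gset_range[OF f pos(1) a.b u] by auto
      have hv: "h (t + a.s) = Gtens l1 l2 m1 g1 g2 (f (t + a.s))"
        unfolding h_def by (rule Gcomp_val[OF u])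
      show ?thesis
      proof (cases "f (t + a.s) \<le> l1")
        case True
        then have "f (t + a.s) = l1" using r by auto
        then show ?thesis using t u r \<open>t \<le> L - a.s\<close> G1 G2 pos
          by (simp add: e1 e2 e3 hv Gtens_val)
      next
        case False
        then show ?thesis using t u r \<open>t \<le> L - a.s\<close> G1 G2 pos
          by (simp add: e1 e2 e3 hv Gtens_val)
      qed
    next
      case False
      have u: "t - (L - a.s) \<in> {0..L}" using t False a.s by auto
      have hv: "h (t - (L - a.s)) = Gtens l1 l2 m1 g1 g2 (f (t - (L - a.s)))"
        unfolding h_def by (rule Gcomp_val[OF u])
      have "0 < f (t - (L - a.s))" "f (t - (L - a.s)) \<le> l1"
        using gset_less_iff[OF f pos(1) a.b, of 0 "t - (L - a.s)"]
          gset_le_iff[OF f pos(1) a.b, of "t - (L - a.s)" a.s] a.s u t False a.F by auto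
      then show ?thesis using t u False G1 G2 pos
        by (simp add: e1 e2 e3 hv Gtens_val)
    qed
  qed
qed

lemma comp_assoc:
  assumes "\<And>t. t \<in> {0..L'} \<Longrightarrow> w t \<in> {0..L}"
  shows "Gcomp L' (Gcomp L g f) w = Gcomp L' g (Gcomp L' f w)"
  using assms by (auto simp: Gcomp_def restrict_def fun_eq_iff)



lemma equivclp_map:
  assumes "equivclp R x y" "\<And>a b. R a b \<Longrightarrow> S (h a) (h b)"
  shows "equivclp S (h x) (h y)"
  using assms(1)
proof (induction rule: equivclp_induct)
  case base then show ?case by simp
next
  case (step y z)
  then show ?case using assms(2) equivclp_into_equivclp by metis
qed

lemma cls_eq: "equivclp (tens_gen D E L) a b \<Longrightarrow> tens_cls D E L a = tens_cls D E L b"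
  unfolding tens_cls_def by (auto intro: equivclp_trans equivclp_sym)

lemma cls_mem: "r \<in> tens_cls D E L r"
  unfolding tens_cls_def by simp

lemma gen_swap:
  assumes "tens_gen D E L x y" "0 < L"
  shows "tens_gen E D L (tens_swap L x) (tens_swap L y)"
proof -
  obtain l1 l2 m1 m2 f g1 g2 x1 x2 where H:
       "0 < l1" "0 < l2" "0 < m1" "0 < m2"
       "f \<in> Gset L (l1 + l2)" "g1 \<in> Gset l1 m1" "g2 \<in> Gset l2 m2"
       "x1 \<in> topspace (gsp D m1)" "x2 \<in> topspace (gsp E m2)"
       "x = ((l1, l2), f, gact D l1 m1 g1 x1, gact E l2 m2 g2 x2)"
       "y = ((m1, m2), Gcomp L (Gtens l1 l2 m1 g1 g2) f, x1, x2)"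
    using assms(1) unfolding tens_gen_def by blast
  interpret a: splitctx L l1 l2 f by unfold_locales (use H assms in auto)
  note W = wd[OF H(5,6,7) assms(2) H(1-4)]
  show ?thesis unfolding tens_gen_def
    apply (rule exI[of _ l2], rule exI[of _ l1], rule exI[of _ m2], rule exI[of _ m1])
    apply (rule exI[of _ "SW L l1 l2 f"], rule exI[of _ g2], rule exI[of _ g1])
    apply (rule exI[of _ x2], rule exI[of _ x1])
    using H a.sw_gset W by (simp add: tens_swap_eq)
qed

lemma braid_cls:
  assumes "0 < L"
  shows "braid D E L (tens_cls D E L r) = tens_cls E D L (tens_swap L r)"
proof -
  have A: "tens_cls E D L (tens_swap L r') = tens_cls E D L (tens_swap L r)"
    if "r' \<in> tens_cls D E L r" for r'
  proof -
    have r': "equivclp (tens_gen D E L) r r'" using that unfolding tens_cls_def by auto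
    have "equivclp (tens_gen E D L) (tens_swap L r) (tens_swap L r')"
      by (rule equivclp_map[OF r']) (use gen_swap assms in auto)
    then show ?thesis using cls_eq by metis
  qed
  have "(\<lambda>r. tens_cls E D L (tens_swap L r)) ` tens_cls D E L r = {tens_cls E D L (tens_swap L r)}"
    using A cls_mem by blast
  then show ?thesis unfolding braid_def by simp
qed

definition actr :: "real \<Rightarrow> (real \<Rightarrow> real) \<Rightarrow> ((real \<times> real) \<times> (real \<Rightarrow> real) \<times> 'a \<times> 'b) \<Rightarrow>
    ((real \<times> real) \<times> (real \<Rightarrow> real) \<times> 'a \<times> 'b)" where
  "actr L' w r = (case r of ((l1, l2), f, x1, x2) \<Rightarrow> ((l1, l2), Gcomp L' f w, x1, x2))"

lemma gen_act:
  assumes "tens_gen D E L x y" "0 < L" "0 < L'" "w \<in> Gset L' L"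
  shows "tens_gen D E L' (actr L' w x) (actr L' w y)"
proof -
  obtain l1 l2 m1 m2 f g1 g2 x1 x2 where H:
       "0 < l1" "0 < l2" "0 < m1" "0 < m2"
       "f \<in> Gset L (l1 + l2)" "g1 \<in> Gset l1 m1" "g2 \<in> Gset l2 m2"
       "x1 \<in> topspace (gsp D m1)" "x2 \<in> topspace (gsp E m2)"
       "x = ((l1, l2), f, gact D l1 m1 g1 x1, gact E l2 m2 g2 x2)"
       "y = ((m1, m2), Gcomp L (Gtens l1 l2 m1 g1 g2) f, x1, x2)"
    using assms(1) unfolding tens_gen_def by blast
  have wr: "\<And>t. t \<in> {0..L'} \<Longrightarrow> w t \<in> {0..L}" using gset_range[OF assms(4,3,2)] by auto
  have fw: "Gcomp L' f w \<in> Gset L' (l1 + l2)"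
    by (rule Gcomp_gset[OF assms(4) H(5)]) (use assms H in auto)
  show ?thesis unfolding tens_gen_def
    apply (rule exI[of _ l1], rule exI[of _ l2], rule exI[of _ m1], rule exI[of _ m2])
    apply (rule exI[of _ "Gcomp L' f w"], rule exI[of _ g1], rule exI[of _ g2])
    apply (rule exI[of _ x1], rule exI[of _ x2])
    using H fw comp_assoc[OF wr] by (simp add: actr_def)
qed

lemma act_cls:
  assumes "0 < L" "0 < L'" "w \<in> Gset L' L"
  shows "tens_act D E L' w (tens_cls D E L r) = tens_cls D E L' (actr L' w r)"
proof -
  have e: "(\<lambda>((l1, l2), \<psi>, x1, x2). tens_cls D E L' ((l1, l2), Gcomp L' \<psi> w, x1, x2))
        = (\<lambda>r. tens_cls D E L' (actr L' w r))"
    by (auto simp: actr_def fun_eq_iff)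
  have A: "tens_cls D E L' (actr L' w r') = tens_cls D E L' (actr L' w r)"
    if "r' \<in> tens_cls D E L r" for r'
  proof -
    have r': "equivclp (tens_gen D E L) r r'" using that unfolding tens_cls_def by auto
    have "equivclp (tens_gen D E L') (actr L' w r) (actr L' w r')"
      by (rule equivclp_map[OF r']) (use gen_act assms in auto)
    then show ?thesis using cls_eq by metis
  qed
  have "(\<lambda>r. tens_cls D E L' (actr L' w r)) ` tens_cls D E L r = {tens_cls D E L' (actr L' w r)}"
    using A cls_mem by blast
  then show ?thesis unfolding tens_act_def e by simp
qed

definition inv_sp :: "real \<Rightarrow> ((real \<times> real) \<times> (real \<Rightarrow> real) \<times> 'a \<times> 'b) \<Rightarrow> real" where
  "inv_sp L r = Gsplit_pt L (fst (fst r)) (fst (snd r))"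

lemma gen_inv:
  assumes "tens_gen D E L x y" "0 < L"
  shows "inv_sp L x = inv_sp L y"
proof -
  obtain l1 l2 m1 m2 f g1 g2 x1 x2 where H:
       "0 < l1" "0 < l2" "0 < m1" "0 < m2"
       "f \<in> Gset L (l1 + l2)" "g1 \<in> Gset l1 m1" "g2 \<in> Gset l2 m2"
       "x1 \<in> topspace (gsp D m1)" "x2 \<in> topspace (gsp E m2)"
       "x = ((l1, l2), f, gact D l1 m1 g1 x1, gact E l2 m2 g2 x2)"
       "y = ((m1, m2), Gcomp L (Gtens l1 l2 m1 g1 g2) f, x1, x2)"
    using assms(1) unfolding tens_gen_def by blast
  show ?thesis using wd(2)[OF H(5,6,7) assms(2) H(1-4)] H(10,11) by (simp add: inv_sp_def)
qed

lemma inv_cls: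
  assumes "r' \<in> tens_cls D E L r" "0 < L"
  shows "inv_sp L r' = inv_sp L r"
proof -
  have "equivclp (tens_gen D E L) r r'" using assms(1) unfolding tens_cls_def by simp
  then show ?thesis
  proof (induction rule: equivclp_induct)
    case base then show ?case by simp
  next
    case (step y z) then show ?case using gen_inv[OF _ assms(2), of D E] by metis
  qed
qed



lemma istopology_dgen: "istopology (\<lambda>U. U \<subseteq> topspace X \<and>
      (\<forall>n \<sigma>. continuous_map (simplex_top n) X \<sigma> \<longrightarrow>
          openin (simplex_top n) {t \<in> topspace (simplex_top n). \<sigma> t \<in> U}))"
proof -
  let ?P = "\<lambda>U. U \<subseteq> topspace X \<and>
      (\<forall>n \<sigma>. continuous_map (simplex_top n) X \<sigma> \<longrightarrow>
          openin (simplex_top n) {t \<in> topspace (simplex_top n). \<sigma> t \<in> U})"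
  have I: "?P (S \<inter> T)" if S: "?P S" and T: "?P T" for S T
  proof (intro conjI allI impI)
    show "S \<inter> T \<subseteq> topspace X" using S by auto
    fix n \<sigma> assume c: "continuous_map (simplex_top n) X \<sigma>"
    have "{t \<in> topspace (simplex_top n). \<sigma> t \<in> S \<inter> T} =
        {t \<in> topspace (simplex_top n). \<sigma> t \<in> S} \<inter> {t \<in> topspace (simplex_top n). \<sigma> t \<in> T}" by auto
    then show "openin (simplex_top n) {t \<in> topspace (simplex_top n). \<sigma> t \<in> S \<inter> T}"
      using S T c by (auto intro: openin_Int)
  qed
  have U: "?P (\<Union>K)" if K: "\<forall>S\<in>K. ?P S" for K
  proof (intro conjI allI impI)
    show "\<Union>K \<subseteq> topspace X" using K by auto
    fix n \<sigma> assume c: "continuous_map (simplex_top n) X \<sigma>"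
    have "{t \<in> topspace (simplex_top n). \<sigma> t \<in> \<Union>K} =
        \<Union>((\<lambda>S. {t \<in> topspace (simplex_top n). \<sigma> t \<in> S}) ` K)" by auto
    then show "openin (simplex_top n) {t \<in> topspace (simplex_top n). \<sigma> t \<in> \<Union>K}"
      using K c by (auto intro!: openin_Union)
  qed
  show ?thesis unfolding istopology_def using I U by blast
qed

lemma openin_dgen: "openin (dgen X) U \<longleftrightarrow> U \<subseteq> topspace X \<and>
      (\<forall>n \<sigma>. continuous_map (simplex_top n) X \<sigma> \<longrightarrow>
          openin (simplex_top n) {t \<in> topspace (simplex_top n). \<sigma> t \<in> U})"
  unfolding dgen_def by (simp add: topology_inverse'[OF istopology_dgen])

lemma openin_imp_dgen: "openin X U \<Longrightarrow> openin (dgen X) U"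
  unfolding openin_dgen
  by (auto simp: openin_subset continuous_map_def)

lemma topspace_dgen [simp]: "topspace (dgen X) = topspace X"
proof
  show "topspace (dgen X) \<subseteq> topspace X"
    using openin_dgen[of X "topspace (dgen X)"] by simp
  show "topspace X \<subseteq> topspace (dgen X)"
    using openin_imp_dgen[of X "topspace X"] openin_subset by auto
qed

lemma continuous_map_dgen:
  assumes "continuous_map X Y f"
  shows "continuous_map (dgen X) (dgen Y) f"
  unfolding continuous_map_def
proof (intro conjI allI impI)
  show "f \<in> topspace (dgen X) \<rightarrow> topspace (dgen Y)" using assms by (auto simp: continuous_map_def)
  fix U assume U: "openin (dgen Y) U"
  show "openin (dgen X) {x \<in> topspace (dgen X). f x \<in> U}"
    unfolding openin_dgen
  proof (intro conjI allI impI)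
    show "{x \<in> topspace (dgen X). f x \<in> U} \<subseteq> topspace X" by auto
    fix n \<sigma> assume c: "continuous_map (simplex_top n) X \<sigma>"
    have c2: "continuous_map (simplex_top n) Y (f \<circ> \<sigma>)" using c assms by (rule continuous_map_compose)
    have "openin (simplex_top n) {t \<in> topspace (simplex_top n). (f \<circ> \<sigma>) t \<in> U}"
      using U c2 unfolding openin_dgen by blast
    moreover have "{t \<in> topspace (simplex_top n). \<sigma> t \<in> {x \<in> topspace (dgen X). f x \<in> U}}
       = {t \<in> topspace (simplex_top n). (f \<circ> \<sigma>) t \<in> U}"
      using c by (auto simp: continuous_map_def)
    ultimately show "openin (simplex_top n) {t \<in> topspace (simplex_top n). \<sigma> t \<in> {x \<in> topspace (dgen X). f x \<in> U}}"
      by simp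
  qed
qed

lemma istopology_quot: "istopology (\<lambda>U. U \<subseteq> q ` topspace X \<and> openin X {x \<in> topspace X. q x \<in> U})"
proof -
  let ?P = "\<lambda>U. U \<subseteq> q ` topspace X \<and> openin X {x \<in> topspace X. q x \<in> U}"
  have I: "?P (S \<inter> T)" if S: "?P S" and T: "?P T" for S T
  proof -
    have "{x \<in> topspace X. q x \<in> S \<inter> T} = {x \<in> topspace X. q x \<in> S} \<inter> {x \<in> topspace X. q x \<in> T}" by auto
    then show ?thesis using S T by (auto intro: openin_Int)
  qed
  have U: "?P (\<Union>K)" if K: "\<forall>S\<in>K. ?P S" for K
  proof -
    have "{x \<in> topspace X. q x \<in> \<Union>K} = \<Union>((\<lambda>S. {x \<in> topspace X. q x \<in> S}) ` K)" by auto
    then show ?thesis using K by (auto intro!: openin_Union)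
  qed
  show ?thesis unfolding istopology_def using I U by blast
qed

lemma openin_quot: "openin (quotient_topology X q) U \<longleftrightarrow> U \<subseteq> q ` topspace X \<and> openin X {x \<in> topspace X. q x \<in> U}"
  unfolding quotient_topology_def by (simp add: topology_inverse'[OF istopology_quot])

lemma topspace_quot [simp]: "topspace (quotient_topology X q) = q ` topspace X"
proof
  show "topspace (quotient_topology X q) \<subseteq> q ` topspace X"
    using openin_quot[of X q "topspace (quotient_topology X q)"] by simp
  have "{x \<in> topspace X. q x \<in> q ` topspace X} = topspace X" by auto
  then have "openin (quotient_topology X q) (q ` topspace X)" unfolding openin_quot by auto
  then show "q ` topspace X \<subseteq> topspace (quotient_topology X q)" using openin_subset by auto
qed

lemma continuous_map_quot: "continuous_map X (quotient_topology X q) q"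
  unfolding continuous_map_def openin_quot by auto

lemma continuous_map_from_quot:
  assumes "continuous_map X Y (\<lambda>x. g (q x))"
  shows "continuous_map (quotient_topology X q) Y g"
  unfolding continuous_map_def
proof (intro conjI allI impI)
  show "g \<in> topspace (quotient_topology X q) \<rightarrow> topspace Y" using assms by (auto simp: continuous_map_def)
  fix U assume U: "openin Y U"
  have "{x \<in> topspace X. q x \<in> {y \<in> topspace (quotient_topology X q). g y \<in> U}} = {x \<in> topspace X. g (q x) \<in> U}"
    by auto
  then show "openin (quotient_topology X q) {x \<in> topspace (quotient_topology X q). g x \<in> U}"
    unfolding openin_quot using assms U by (auto simp: continuous_map_def)
qed



definition CO :: "real \<Rightarrow> (real \<Rightarrow> real) topology" where
  "CO a = topology_generated_by {{f. f ` K \<subseteq> U} | K U. compact K \<and> K \<subseteq> {0..a} \<and> open U}"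

definition uclose :: "real \<Rightarrow> (real \<Rightarrow> real) \<Rightarrow> (real \<Rightarrow> real) \<Rightarrow> real \<Rightarrow> bool" where
  "uclose a g f e \<longleftrightarrow> (\<forall>t\<in>{0..a}. \<bar>g t - f t\<bar> < e)"

lemma Gtop_CO: "Gtop a b = dgen (subtopology (CO a) (Gset a b))"
  by (simp add: Gtop_def CO_def)

lemma topspace_CO [simp]: "topspace (CO a) = UNIV"
proof -
  have "UNIV \<in> {{f::real\<Rightarrow>real. f ` K \<subseteq> U} | K U. compact K \<and> K \<subseteq> {0..a} \<and> open U}"
    by (rule CollectI, rule exI[of _ "{}"], rule exI[of _ UNIV]) auto
  then show ?thesis unfolding CO_def by auto
qed

lemma KL1:
  assumes W: "openin (subtopology (CO a) (Gset a b)) W" and f0: "f0 \<in> W"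
  shows "\<exists>e>0. \<forall>g\<in>Gset a b. uclose a g f0 e \<longrightarrow> g \<in> W"
proof -
  obtain W' where W': "openin (CO a) W'" "W = W' \<inter> Gset a b"
    using W by (auto simp: openin_subtopology)
  have gen: "generate_topology_on {{f. f ` K \<subseteq> U} | K U. compact K \<and> K \<subseteq> {0..a} \<and> open U} W'"
    using W'(1) unfolding CO_def by (rule openin_topology_generated_by)
  have "\<forall>f0\<in>W' \<inter> Gset a b. \<exists>e>0. \<forall>g\<in>Gset a b. uclose a g f0 e \<longrightarrow> g \<in> W'"
    using gen
  proof (induction rule: generate_topology_on.induct)
    case Empty
    then show ?case by simp
  next
    case (Int A B)
    show ?case
    proof
      fix f0 assume "f0 \<in> A \<inter> B \<inter> Gset a b"
      then obtain e1 e2 where "e1 > 0" "\<forall>g\<in>Gset a b. uclose a g f0 e1 \<longrightarrow> g \<in> A"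
        "e2 > 0" "\<forall>g\<in>Gset a b. uclose a g f0 e2 \<longrightarrow> g \<in> B"
        using Int.IH by blast
      then show "\<exists>e>0. \<forall>g\<in>Gset a b. uclose a g f0 e \<longrightarrow> g \<in> A \<inter> B"
        by (intro exI[of _ "min e1 e2"]) (auto simp: uclose_def)
    qed
  next
    case (UN K)
    show ?case
    proof
      fix f0 assume "f0 \<in> \<Union>K \<inter> Gset a b"
      then obtain k where k: "k \<in> K" "f0 \<in> k \<inter> Gset a b" by auto
      then obtain e where "e > 0" "\<forall>g\<in>Gset a b. uclose a g f0 e \<longrightarrow> g \<in> k"
        using UN.IH by blast
      then show "\<exists>e>0. \<forall>g\<in>Gset a b. uclose a g f0 e \<longrightarrow> g \<in> \<Union>K" using k by blast
    qed
  next
    case (Basis s)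
    then obtain K U where KU: "s = {f. f ` K \<subseteq> U}" "compact K" "K \<subseteq> {0..a}" "open U" by auto
    show ?case
    proof
      fix f0 assume f0: "f0 \<in> s \<inter> Gset a b"
      show "\<exists>e>0. \<forall>g\<in>Gset a b. uclose a g f0 e \<longrightarrow> g \<in> s"
      proof (cases "K = {}")
        case True
        then show ?thesis using KU by (intro exI[of _ 1]) auto
      next
        case False
        have cont: "continuous_on {0..a} f0" using f0 unfolding Gset_def
          using homeomorphic_imp_continuous_map by fastforce
        have cK: "compact (f0 ` K)"
          by (rule compact_continuous_image[OF continuous_on_subset[OF cont KU(3)] KU(2)])
        have "f0 ` K \<inter> (- U) = {}" using f0 KU by auto
        then obtain d where d: "d > 0" "\<forall>x\<in>f0 ` K. \<forall>y\<in>- U. d \<le> dist x y"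
          using separate_compact_closed[OF cK] KU(4) by (metis closed_Compl)
        show ?thesis
        proof (intro exI[of _ d] conjI ballI impI)
          show "d > 0" by fact
          fix g assume g: "g \<in> Gset a b" "uclose a g f0 d"
          have "g t \<in> U" if t: "t \<in> K" for t
          proof (rule ccontr)
            assume "g t \<notin> U"
            then have "d \<le> dist (f0 t) (g t)" using d t by auto
            moreover have "\<bar>g t - f0 t\<bar> < d" using g(2) t KU(3) unfolding uclose_def by auto
            ultimately show False by (simp add: dist_real_def abs_minus_commute)
          qed
          then show "g \<in> s" using KU by auto
        qed
      qed
    qed
  qed
  then show ?thesis using f0 W' by blast
qed

lemma mono_approx:
  fixes f :: "real \<Rightarrow> real" and a e :: real
  assumes cont: "continuous_on {0..a} f" and a: "0 < a" and e: "0 < e"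
  shows "\<exists>T. finite T \<and> T \<noteq> {} \<and> T \<subseteq> {0..a} \<and>
     (\<forall>t\<in>{0..a}. \<exists>p\<in>T. \<exists>q\<in>T. p \<le> t \<and> t \<le> q \<and> \<bar>f q - f p\<bar> < e)"
proof -
  have "uniformly_continuous_on {0..a} f" by (rule compact_uniformly_continuous[OF cont compact_Icc])
  then obtain d where d: "d > 0" "\<forall>x\<in>{0..a}. \<forall>x'\<in>{0..a}. dist x' x < d \<longrightarrow> dist (f x') (f x) < e"
    unfolding uniformly_continuous_on_def using e by blast
  obtain n :: nat where n: "a / d < real n" using reals_Archimedean2 by blast
  have npos: "0 < real n" using n a d by (smt (verit) divide_pos_pos)
  have an: "a / real n < d" using n npos d a by (simp add: field_simps)
  define T where "T = (\<lambda>i::nat. a * real i / real n) ` {..n}"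
  have Tsub: "T \<subseteq> {0..a}" unfolding T_def using a npos by (auto simp: field_simps)
  have "\<exists>p\<in>T. \<exists>q\<in>T. p \<le> t \<and> t \<le> q \<and> \<bar>f q - f p\<bar> < e" if t: "t \<in> {0..a}" for t
  proof -
    define x where "x = t * real n / a"
    have x0: "0 \<le> x" using t a npos by (simp add: x_def)
    define i where "i = nat \<lfloor>x\<rfloor>"
    have ri: "real i = of_int \<lfloor>x\<rfloor>" using x0 by (simp add: i_def)
    have ix: "real i \<le> x" "x < real i + 1" using ri by linarith+
    show ?thesis
    proof (cases "i < n")
      case True
      define p where "p = a * real i / real n"
      define q where "q = a * real (Suc i) / real n"
      have pT: "p \<in> T" unfolding T_def p_def using True by auto
      have qT: "q \<in> T" unfolding T_def q_def using True by (intro image_eqI[of _ _ "Suc i"]) auto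
      have "p \<le> t" using ix(1) a npos unfolding p_def x_def by (simp add: field_simps)
      moreover have "t \<le> q" using ix(2) a npos unfolding q_def x_def by (simp add: field_simps)
      moreover have "q - p = a / real n" unfolding p_def q_def by (simp add: add_divide_distrib ring_distribs)
      moreover have "p \<in> {0..a}" "q \<in> {0..a}" using pT qT Tsub by auto
      ultimately have "dist q p < d" "p \<in> {0..a}" "q \<in> {0..a}" using an by (auto simp: dist_real_def)
      then have "dist (f q) (f p) < e" using d by blast
      then show ?thesis using pT qT \<open>p \<le> t\<close> \<open>t \<le> q\<close> by (auto simp: dist_real_def)
    next
      case False
      then have "real n \<le> x" using ix by linarith
      then have "a \<le> t" using a npos unfolding x_def by (simp add: field_simps)
      then have "t = a" using t by auto
      moreover have "a \<in> T" unfolding T_def using npos by (auto intro!: image_eqI[of _ _ n])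
      ultimately show ?thesis using e by (intro bexI[of _ a]) auto
    qed
  qed
  moreover have "finite T" "T \<noteq> {}" unfolding T_def by auto
  ultimately show ?thesis using Tsub by blast
qed

lemma KL2:
  assumes a: "0 < a" and b: "0 < b" and Wsub: "W \<subseteq> Gset a b"
    and H: "\<forall>f0\<in>W. \<exists>e>0. \<forall>g\<in>Gset a b. uclose a g f0 e \<longrightarrow> g \<in> W"
  shows "openin (subtopology (CO a) (Gset a b)) W"
proof -
  have N: "\<exists>N. openin (CO a) N \<and> f0 \<in> N \<and> N \<inter> Gset a b \<subseteq> W" if f0: "f0 \<in> W" for f0
  proof -
    obtain e where e: "e > 0" "\<forall>g\<in>Gset a b. uclose a g f0 e \<longrightarrow> g \<in> W" using H f0 by blast
    have f0G: "f0 \<in> Gset a b" using f0 Wsub by auto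
    obtain T where T: "finite T" "T \<noteq> {}" "T \<subseteq> {0..a}"
       "\<forall>t\<in>{0..a}. \<exists>p\<in>T. \<exists>q\<in>T. p \<le> t \<and> t \<le> q \<and> \<bar>f0 q - f0 p\<bar> < e / 2"
      using mono_approx[OF gsetD(2)[OF f0G a b] a, of "e/2"] e by auto
    define N where "N = \<Inter>((\<lambda>p. {f::real\<Rightarrow>real. f ` {p} \<subseteq> ball (f0 p) (e/2)}) ` T)"
    have "openin (CO a) N"
      unfolding N_def CO_def openin_topology_generated_by_iff
    proof (rule generate_topology_on_Inter)
      show "finite ((\<lambda>p. {f::real\<Rightarrow>real. f ` {p} \<subseteq> ball (f0 p) (e/2)}) ` T)" using T by auto
      show "(\<lambda>p. {f::real\<Rightarrow>real. f ` {p} \<subseteq> ball (f0 p) (e/2)}) ` T \<noteq> {}" using T by auto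
      fix K assume "K \<in> (\<lambda>p. {f::real\<Rightarrow>real. f ` {p} \<subseteq> ball (f0 p) (e/2)}) ` T"
      then obtain p where p: "p \<in> T" "K = {f. f ` {p} \<subseteq> ball (f0 p) (e/2)}" by auto
      show "generate_topology_on {{f. f ` K \<subseteq> U} | K U. compact K \<and> K \<subseteq> {0..a} \<and> open U} K"
        apply (rule generate_topology_on.Basis)
        apply (rule CollectI, rule exI[of _ "{p}"], rule exI[of _ "ball (f0 p) (e/2)"])
        using p T by auto
    qed
    moreover have "f0 \<in> N" unfolding N_def using e by auto
    moreover have "N \<inter> Gset a b \<subseteq> W"
    proof
      fix g assume g: "g \<in> N \<inter> Gset a b"
      have gp: "\<bar>g p - f0 p\<bar> < e/2" if "p \<in> T" for p
        using g that unfolding N_def by (auto simp: dist_real_def abs_minus_commute)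
      have "uclose a g f0 e" unfolding uclose_def
      proof
        fix t assume t: "t \<in> {0..a}"
        then obtain p q where pq: "p \<in> T" "q \<in> T" "p \<le> t" "t \<le> q" "\<bar>f0 q - f0 p\<bar> < e / 2"
          using T(4) by blast
        have pa: "p \<in> {0..a}" "q \<in> {0..a}" using pq T(3) by auto
        have "g p \<le> g t" "g t \<le> g q" using gset_le_iff[of g a b] g pq t pa a b by auto
        moreover have "f0 p \<le> f0 t" "f0 t \<le> f0 q" using gset_le_iff[OF f0G a b] pq t pa by auto
        moreover have "\<bar>g p - f0 p\<bar> < e/2" "\<bar>g q - f0 q\<bar> < e/2" using gp pq by auto
        ultimately show "\<bar>g t - f0 t\<bar> < e" using pq(5) by linarith
      qed
      then show "g \<in> W" using e g by blast
    qed
    ultimately show ?thesis by blast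
  qed
  then obtain NN where NN: "\<And>f0. f0 \<in> W \<Longrightarrow> openin (CO a) (NN f0) \<and> f0 \<in> NN f0 \<and> NN f0 \<inter> Gset a b \<subseteq> W"
    by metis
  have "openin (CO a) (\<Union>(NN ` W))" using NN by (auto intro!: openin_Union)
  moreover have "W = (\<Union>(NN ` W)) \<inter> Gset a b" using NN Wsub by blast
  ultimately show ?thesis unfolding openin_subtopology by blast
qed



lemma split_cont:
  assumes f0: "f0 \<in> Gset L b" and L: "0 < L" and b: "0 < b" and c: "0 < c" "c < b" and eta: "0 < eta"
  shows "\<exists>e>0. \<forall>g\<in>Gset L b. uclose L g f0 e \<longrightarrow> \<bar>Gsplit_pt L c g - Gsplit_pt L c f0\<bar> < eta"
proof -
  define s0 where "s0 = Gsplit_pt L c f0"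
  have s0: "0 < s0" "s0 < L" "f0 s0 = c" using split_pt_strict[OF f0 L b c] split_pt[OF f0 L b] c
    unfolding s0_def by auto
  define e1 where "e1 = min eta (min s0 (L - s0)) / 2"
  have e1: "0 < e1" "e1 < eta" "e1 < s0" "e1 < L - s0" using s0 eta unfolding e1_def by auto
  define p where "p = s0 - e1"
  define q where "q = s0 + e1"
  have pq: "p \<in> {0..L}" "q \<in> {0..L}" using e1 s0 unfolding p_def q_def by auto
  have "f0 p < c" using gset_less_iff[OF f0 L b pq(1), of s0] s0 e1 unfolding p_def by auto
  moreover have "c < f0 q" using gset_less_iff[OF f0 L b _ pq(2), of s0] s0 e1 unfolding q_def by auto
  ultimately have epos: "0 < min (c - f0 p) (f0 q - c)" by auto
  show ?thesis
  proof (intro exI[of _ "min (c - f0 p) (f0 q - c)"] conjI ballI impI)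
    show "0 < min (c - f0 p) (f0 q - c)" by fact
    fix g assume g: "g \<in> Gset L b" "uclose L g f0 (min (c - f0 p) (f0 q - c))"
    define s where "s = Gsplit_pt L c g"
    have s: "s \<in> {0..L}" "g s = c" using split_pt[OF g(1) L b] c unfolding s_def by auto
    have "\<bar>g p - f0 p\<bar> < min (c - f0 p) (f0 q - c)" using g(2) pq(1) unfolding uclose_def by blast
    then have "g p < g s" using s(2) by linarith
    then have "p < s" using gset_less_iff[OF g(1) L b pq(1) s(1)] by simp
    moreover have "\<bar>g q - f0 q\<bar> < min (c - f0 p) (f0 q - c)" using g(2) pq(2) unfolding uclose_def by blast
    then have "g s < g q" using s(2) by linarith
    then have "s < q" using gset_less_iff[OF g(1) L b s(1) pq(2)] by simp
    ultimately show "\<bar>Gsplit_pt L c g - Gsplit_pt L c f0\<bar> < eta"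
      using e1 unfolding s_def[symmetric] s0_def[symmetric] p_def q_def by auto
  qed
qed

context splitctx
begin

lemma ext_gset: "Gtens L L (l1 + l2) f f \<in> Gset (L + L) (l1 + l2 + (l1 + l2))"
  by (rule Gtens_gset[OF f f L b L b])

lemma sw_ext: "t \<in> {0..L} \<Longrightarrow> SW L l1 l2 f t = Gtens L L (l1 + l2) f f (t + s) - l1"
proof -
  assume t: "t \<in> {0..L}"
  have e: "t - (L - s) = t + s - L" by simp
  show ?thesis using s t by (auto simp: sw_val Gtens_val e)
qed

end

lemma ext_close:
  assumes "uclose L g f e" "u \<in> {0..L+L}"
  shows "\<bar>Gtens L L B g g u - Gtens L L B f f u\<bar> < e"
  using assms by (auto simp: Gtens_val uclose_def)

lemma sw_est:
  assumes f0: "f0 \<in> Gset L (l1 + l2)" and pos: "0 < L" "0 < l1" "0 < l2" and d: "0 < d"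
  shows "\<exists>e>0. \<forall>g\<in>Gset L (l1 + l2). uclose L g f0 e \<longrightarrow> uclose L (SW L l1 l2 g) (SW L l1 l2 f0) d"
proof -
  interpret a: splitctx L l1 l2 f0 by unfold_locales (use assms in auto)
  have "continuous_on {0..L+L} (Gtens L L (l1 + l2) f0 f0)"
    using gsetD(2)[OF a.ext_gset] pos by auto
  then have "uniformly_continuous_on {0..L+L} (Gtens L L (l1 + l2) f0 f0)"
    by (rule compact_uniformly_continuous) simp
  then obtain eta where eta: "eta > 0" "\<forall>x\<in>{0..L+L}. \<forall>x'\<in>{0..L+L}. dist x' x < eta \<longrightarrow>
      dist (Gtens L L (l1 + l2) f0 f0 x') (Gtens L L (l1 + l2) f0 f0 x) < d/2"
    unfolding uniformly_continuous_on_def using d by (meson half_gt_zero)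
  obtain e1 where e1: "e1 > 0" "\<forall>g\<in>Gset L (l1+l2). uclose L g f0 e1 \<longrightarrow>
      \<bar>Gsplit_pt L l1 g - Gsplit_pt L l1 f0\<bar> < eta"
    using split_cont[OF f0 pos(1) a.b pos(2) _ eta(1)] pos by auto
  show ?thesis
  proof (intro exI[of _ "min e1 (d/2)"] conjI ballI impI)
    show "0 < min e1 (d/2)" using e1 d by auto
    fix g assume g: "g \<in> Gset L (l1 + l2)" "uclose L g f0 (min e1 (d/2))"
    interpret c: splitctx L l1 l2 g by unfold_locales (use g pos in auto)
    have "uclose L g f0 e1" unfolding uclose_def
    proof
      fix t assume "t \<in> {0..L}"
      then have "\<bar>g t - f0 t\<bar> < min e1 (d/2)" using g(2) unfolding uclose_def by blast
      then show "\<bar>g t - f0 t\<bar> < e1" by simp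
    qed
    then have ss: "\<bar>c.s - a.s\<bar> < eta" using e1(2) g(1) unfolding c.s_def a.s_def by blast
    show "uclose L (SW L l1 l2 g) (SW L l1 l2 f0) d"
      unfolding uclose_def
    proof
      fix t assume t: "t \<in> {0..L}"
      have u: "t + c.s \<in> {0..L+L}" "t + a.s \<in> {0..L+L}" using t c.s a.s by auto
      have 1: "\<bar>Gtens L L (l1 + l2) g g (t + c.s) - Gtens L L (l1 + l2) f0 f0 (t + c.s)\<bar> < d/2"
      proof (rule ext_close[OF _ u(1)])
        show "uclose L g f0 (d/2)" unfolding uclose_def
        proof
          fix t assume "t \<in> {0..L}"
          then have "\<bar>g t - f0 t\<bar> < min e1 (d/2)" using g(2) unfolding uclose_def by blast
          then show "\<bar>g t - f0 t\<bar> < d/2" by simp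
        qed
      qed
      have "dist (t + c.s) (t + a.s) < eta" using ss by (simp add: dist_real_def)
      then have 2: "\<bar>Gtens L L (l1 + l2) f0 f0 (t + c.s) - Gtens L L (l1 + l2) f0 f0 (t + a.s)\<bar> < d/2"
        using eta(2) u by (auto simp: dist_real_def)
      show "\<bar>SW L l1 l2 g t - SW L l1 l2 f0 t\<bar> < d"
        using 1 2 c.sw_ext[OF t] a.sw_ext[OF t] by linarith
    qed
  qed
qed

lemma SW_cont:
  assumes pos: "0 < L" "0 < l1" "0 < l2"
  shows "continuous_map (subtopology (CO L) (Gset L (l1 + l2))) (subtopology (CO L) (Gset L (l2 + l1))) (SW L l1 l2)"
  unfolding continuous_map_def
proof (intro conjI allI impI)
  have "SW L l1 l2 f \<in> Gset L (l2 + l1)" if "f \<in> Gset L (l1 + l2)" for f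
  proof -
    interpret a: splitctx L l1 l2 f by unfold_locales (use that pos in auto)
    show ?thesis by (rule a.sw_gset)
  qed
  then show "SW L l1 l2 \<in> topspace (subtopology (CO L) (Gset L (l1 + l2))) \<rightarrow>
      topspace (subtopology (CO L) (Gset L (l2 + l1)))" by auto
  note swG = this
  fix U assume U: "openin (subtopology (CO L) (Gset L (l2 + l1))) U"
  have "openin (subtopology (CO L) (Gset L (l1 + l2))) {f \<in> Gset L (l1 + l2). SW L l1 l2 f \<in> U}"
  proof (rule KL2)
    show "0 < L" "0 < l1 + l2" using pos by auto
    show "{f \<in> Gset L (l1 + l2). SW L l1 l2 f \<in> U} \<subseteq> Gset L (l1 + l2)" by auto
    show "\<forall>f0\<in>{f \<in> Gset L (l1 + l2). SW L l1 l2 f \<in> U}. \<exists>e>0. \<forall>g\<in>Gset L (l1 + l2).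
        uclose L g f0 e \<longrightarrow> g \<in> {f \<in> Gset L (l1 + l2). SW L l1 l2 f \<in> U}"
    proof
      fix f0 assume f0: "f0 \<in> {f \<in> Gset L (l1 + l2). SW L l1 l2 f \<in> U}"
      obtain d where d: "d > 0" "\<forall>g\<in>Gset L (l2 + l1). uclose L g (SW L l1 l2 f0) d \<longrightarrow> g \<in> U"
        using KL1[OF U] f0 by blast
      obtain e where e: "e > 0" "\<forall>g\<in>Gset L (l1 + l2). uclose L g f0 e \<longrightarrow> uclose L (SW L l1 l2 g) (SW L l1 l2 f0) d"
        using sw_est[of f0 L l1 l2 d] f0 pos d by auto
      show "\<exists>e>0. \<forall>g\<in>Gset L (l1 + l2). uclose L g f0 e \<longrightarrow> g \<in> {f \<in> Gset L (l1 + l2). SW L l1 l2 f \<in> U}"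
      proof (intro exI[of _ e] conjI ballI impI)
        show "0 < e" by fact
        fix g assume g: "g \<in> Gset L (l1 + l2)" "uclose L g f0 e"
        have "SW L l1 l2 g \<in> Gset L (l2 + l1)" using swG g(1) by auto
        moreover have "uclose L (SW L l1 l2 g) (SW L l1 l2 f0) d" using e(2) g by blast
        ultimately have "SW L l1 l2 g \<in> U" using d(2) by blast
        then show "g \<in> {f \<in> Gset L (l1 + l2). SW L l1 l2 f \<in> U}" using g(1) by blast
      qed
    qed
  qed
  then show "openin (subtopology (CO L) (Gset L (l1 + l2)))
     {x \<in> topspace (subtopology (CO L) (Gset L (l1 + l2))). SW L l1 l2 x \<in> U}"
    by simp
qed



lemma Gtop_SW_cont:
  assumes "0 < L" "0 < l1" "0 < l2"
  shows "continuous_map (Gtop L (l1 + l2)) (Gtop L (l2 + l1)) (SW L l1 l2)"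
  unfolding Gtop_CO by (rule continuous_map_dgen[OF SW_cont[OF assms]])

lemma topspace_Gtop [simp]: "topspace (Gtop a b) = Gset a b"
  by (simp add: Gtop_CO)

lemma topspace_dprod [simp]: "topspace (dprod X Y) = topspace X \<times> topspace Y"
  by (simp add: dprod_def)

definition hmap :: "real \<Rightarrow> real \<Rightarrow> real \<Rightarrow> (real \<Rightarrow> real) \<times> 'a \<times> 'b \<Rightarrow> (real \<Rightarrow> real) \<times> 'b \<times> 'a" where
  "hmap L l1 l2 y = (SW L l1 l2 (fst y), snd (snd y), fst (snd y))"

lemma tens_swap_hmap: "tens_swap L ((l1, l2), y) = ((l2, l1), hmap L l1 l2 y)"
  by (cases y) (auto simp: tens_swap_eq hmap_def)

lemma hmap_cont:
  assumes "0 < L" "0 < l1" "0 < l2"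
  shows "continuous_map (dprod (Gtop L (l1 + l2)) (dprod X Y)) (dprod (Gtop L (l2 + l1)) (dprod Y X)) (hmap L l1 l2)"
proof -
  have sw: "continuous_map (dprod X Y) (dprod Y X) (\<lambda>p. (snd p, fst p))"
    unfolding dprod_def
    by (rule continuous_map_dgen) (intro continuous_map_pairedI continuous_map_fst continuous_map_snd)
  have pm: "continuous_map (prod_topology (Gtop L (l1 + l2)) (dprod X Y)) (prod_topology (Gtop L (l2 + l1)) (dprod Y X))
      (\<lambda>y. (SW L l1 l2 (fst y), (\<lambda>p. (snd p, fst p)) (snd y)))"
  proof (rule continuous_map_pairedI)
    show "continuous_map (prod_topology (Gtop L (l1 + l2)) (dprod X Y)) (Gtop L (l2 + l1)) (\<lambda>y. SW L l1 l2 (fst y))"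
      using continuous_map_compose[OF continuous_map_fst Gtop_SW_cont[OF assms]] by (simp add: o_def)
    show "continuous_map (prod_topology (Gtop L (l1 + l2)) (dprod X Y)) (dprod Y X) (\<lambda>y. (\<lambda>p. (snd p, fst p)) (snd y))"
      using continuous_map_compose[OF continuous_map_snd sw] by (simp add: o_def)
  qed
  then have "continuous_map (prod_topology (Gtop L (l1 + l2)) (dprod X Y)) (prod_topology (Gtop L (l2 + l1)) (dprod Y X))
      (hmap L l1 l2)"
  proof -
    have e: "hmap L l1 l2 = (\<lambda>y. (SW L l1 l2 (fst y), (\<lambda>p. (snd p, fst p)) (snd y)))"
      by (rule ext) (simp add: hmap_def)
    show ?thesis unfolding e by (rule pm)
  qed
  then show ?thesis unfolding dprod_def[of "Gtop L _"] by (rule continuous_map_dgen)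
qed

lemma tens_sum_swap_cont:
  assumes L: "0 < L"
  shows "continuous_map (tens_sum D E L) (tens_sum E D L) (tens_swap L)"
  unfolding continuous_map_def
proof (intro conjI allI impI)
  have top: "tens_swap L r \<in> topspace (tens_sum E D L)" if r: "r \<in> topspace (tens_sum D E L)" for r
  proof -
    obtain l1 l2 y where ry: "r = ((l1, l2), y)" by (metis prod.collapse)
    have H: "0 < l1" "0 < l2" "y \<in> topspace (dprod (Gtop L (l1 + l2)) (dprod (gsp D l1) (gsp E l2)))"
      using r unfolding ry tens_sum_def by (auto simp: tens_index_def)
    have "hmap L l1 l2 y \<in> topspace (dprod (Gtop L (l2 + l1)) (dprod (gsp E l2) (gsp D l1)))"
      using hmap_cont[OF L H(1,2)] H(3) by (auto simp: continuous_map_def)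
    then show ?thesis using H unfolding ry tens_swap_hmap tens_sum_def by (auto simp: tens_index_def)
  qed
  then show "tens_swap L \<in> topspace (tens_sum D E L) \<rightarrow> topspace (tens_sum E D L)" by auto
  fix U assume U: "openin (tens_sum E D L) U"
  show "openin (tens_sum D E L) {x \<in> topspace (tens_sum D E L). tens_swap L x \<in> U}"
    unfolding tens_sum_def openin_sum_topology
  proof (intro conjI ballI)
    show "{x \<in> topspace (sum_topology (\<lambda>(l1, l2). dprod (Gtop L (l1 + l2)) (dprod (gsp D l1) (gsp E l2))) tens_index).
        tens_swap L x \<in> U} \<subseteq> Sigma tens_index (topspace \<circ> (\<lambda>(l1, l2). dprod (Gtop L (l1 + l2)) (dprod (gsp D l1) (gsp E l2))))"
      by auto
    fix i assume i: "i \<in> tens_index"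
    obtain l1 l2 where il: "i = (l1, l2)" by (metis prod.collapse)
    have pos: "0 < l1" "0 < l2" using i il by (auto simp: tens_index_def)
    have Ui: "openin (dprod (Gtop L (l2 + l1)) (dprod (gsp E l2) (gsp D l1))) {z. ((l2, l1), z) \<in> U}"
      using U pos unfolding tens_sum_def openin_sum_topology by (auto simp: tens_index_def)
    have "openin (dprod (Gtop L (l1 + l2)) (dprod (gsp D l1) (gsp E l2)))
        {y \<in> topspace (dprod (Gtop L (l1 + l2)) (dprod (gsp D l1) (gsp E l2))). hmap L l1 l2 y \<in> {z. ((l2, l1), z) \<in> U}}"
      using hmap_cont[OF L pos] Ui unfolding continuous_map_def by blast
    moreover have "{y \<in> topspace (dprod (Gtop L (l1 + l2)) (dprod (gsp D l1) (gsp E l2))). hmap L l1 l2 y \<in> {z. ((l2, l1), z) \<in> U}}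
      = {x. (i, x) \<in> {x \<in> topspace (sum_topology (\<lambda>(l1, l2). dprod (Gtop L (l1 + l2)) (dprod (gsp D l1) (gsp E l2))) tens_index).
        tens_swap L x \<in> U}}"
      using i unfolding il by (auto simp: tens_swap_hmap)
    ultimately show "openin ((\<lambda>(l1, l2). dprod (Gtop L (l1 + l2)) (dprod (gsp D l1) (gsp E l2))) i)
        {x. (i, x) \<in> {x \<in> topspace (sum_topology (\<lambda>(l1, l2). dprod (Gtop L (l1 + l2)) (dprod (gsp D l1) (gsp E l2))) tens_index).
        tens_swap L x \<in> U}}"
      unfolding il by simp
  qed
qed

lemma braid_cont:
  assumes L: "0 < L"
  shows "continuous_map (tens_top D E L) (tens_top E D L) (braid D E L)"
  unfolding tens_top_def
proof (rule continuous_map_from_quot)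
  have "continuous_map (tens_sum D E L) (quotient_topology (tens_sum E D L) (tens_cls E D L))
     (tens_cls E D L \<circ> tens_swap L)"
    by (rule continuous_map_compose[OF tens_sum_swap_cont[OF L] continuous_map_quot])
  moreover have "(tens_cls E D L \<circ> tens_swap L) = (\<lambda>x. braid D E L (tens_cls D E L x))"
    by (rule ext) (simp add: braid_cls[OF L])
  ultimately show "continuous_map (tens_sum D E L) (quotient_topology (tens_sum E D L) (tens_cls E D L))
     (\<lambda>x. braid D E L (tens_cls D E L x))" by simp
qed

lemma swap_swap:
  assumes L: "0 < L" and r: "r \<in> topspace (tens_sum D E L)"
  shows "tens_swap L (tens_swap L r) = r"
proof -
  obtain l1 l2 f x1 x2 where ry: "r = ((l1, l2), f, x1, x2)" by (metis prod.collapse)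
  have H: "0 < l1" "0 < l2" "f \<in> Gset L (l1 + l2)"
    using r unfolding ry tens_sum_def by (auto simp: tens_index_def)
  interpret a: splitctx L l1 l2 f by unfold_locales (use H L in auto)
  show ?thesis unfolding ry by (simp add: tens_swap_eq a.sw_sw)
qed

lemma braid_homeo:
  assumes L: "0 < L"
  shows "homeomorphic_map (tens_top D E L) (tens_top E D L) (braid D E L)"
proof (rule homeomorphic_maps_imp_map[of _ _ _ "braid E D L"])
  show "homeomorphic_maps (tens_top D E L) (tens_top E D L) (braid D E L) (braid E D L)"
    unfolding homeomorphic_maps_def
  proof (intro conjI ballI)
    show "continuous_map (tens_top D E L) (tens_top E D L) (braid D E L)" by (rule braid_cont[OF L])
    show "continuous_map (tens_top E D L) (tens_top D E L) (braid E D L)" by (rule braid_cont[OF L])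
    fix c assume "c \<in> topspace (tens_top D E L)"
    then obtain r where r: "r \<in> topspace (tens_sum D E L)" "c = tens_cls D E L r"
      unfolding tens_top_def by auto
    show "braid E D L (braid D E L c) = c"
      unfolding r(2) braid_cls[OF L] swap_swap[OF L r(1)] ..
  next
    fix c assume "c \<in> topspace (tens_top E D L)"
    then obtain r where r: "r \<in> topspace (tens_sum E D L)" "c = tens_cls E D L r"
      unfolding tens_top_def by auto
    show "braid D E L (braid E D L c) = c"
      unfolding r(2) braid_cls[OF L] swap_swap[OF L r(1)] ..
  qed
qed



definition ptG :: "'a \<Rightarrow> 'a gspace" where
  "ptG a = \<lparr>gsp = (\<lambda>l. discrete_topology {a}), gact = (\<lambda>l1 l2 f x. x)\<rparr>"

lemma dgen_cont_from: "continuous_map X Y f \<Longrightarrow> continuous_map (dgen X) Y f"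
  unfolding continuous_map_def using openin_imp_dgen by auto

lemma ptG_G_space: "G_space (ptG a)"
  unfolding G_space_def
proof (intro conjI allI impI ballI)
  fix l :: real
  show "delta_generated (gsp (ptG a) l)"
    unfolding delta_generated_def topology_eq
  proof
    fix S
    show "openin (dgen (gsp (ptG a) l)) S = openin (gsp (ptG a) l) S"
      using openin_imp_dgen[of "gsp (ptG a) l" S] openin_dgen[of "gsp (ptG a) l" S]
      by (auto simp: ptG_def)
  qed
next
  fix l1 l2 :: real
  have "continuous_map (prod_topology (Gtop l1 l2) (discrete_topology {a})) (discrete_topology {a}) snd"
    by (rule continuous_map_snd)
  then have "continuous_map (dprod (Gtop l1 l2) (discrete_topology {a})) (discrete_topology {a}) snd"
    unfolding dprod_def by (rule dgen_cont_from)
  then show "continuous_map (dprod (Gtop l1 l2) (gsp (ptG a) l2)) (gsp (ptG a) l1)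
      (\<lambda>(\<phi>, x). gact (ptG a) l1 l2 \<phi> x)"
    by (simp add: ptG_def case_prod_unfold)
qed (auto simp: ptG_def)

definition om :: "real \<Rightarrow> real" where "om = restrict (\<lambda>t. t * t / 2) {0..2}"

lemma om_gset: "om \<in> Gset 2 2"
proof -
  have c: "continuous_on {0..2} om"
    by (rule continuous_on_cong[THEN iffD1, OF refl _ continuous_on_subset[of UNIV "\<lambda>t::real. t * t / 2"]])
      (auto simp: om_def intro!: continuous_intros)
  have sm: "strict_mono_on {0..2} om"
    unfolding strict_mono_on_def om_def
    by (auto intro!: divide_strict_right_mono mult_strict_mono)
  show ?thesis by (subst gset_iff) (use c sm in \<open>auto simp: om_def\<close>)
qed

lemma om_sqrt: "om (sqrt 2) = 1" "sqrt 2 \<in> {0..2::real}"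
proof -
  have "sqrt 2 \<le> (2::real)" by (smt (verit) real_sqrt_le_iff real_sqrt_four)
  then show "sqrt 2 \<in> {0..2::real}" by auto
  then show "om (sqrt 2) = 1" by (simp add: om_def)
qed

lemma not_natural: "\<not> braid_natural (ptG (a::'a)) (ptG (b::'b))"
proof
  assume nat: "braid_natural (ptG a) (ptG b)"
  let ?D = "ptG a" and ?E = "ptG b"
  define r :: "(real \<times> real) \<times> (real \<Rightarrow> real) \<times> 'a \<times> 'b" where "r = ((1, 1), Gid 2, a, b)"
  have G2: "Gid 2 \<in> Gset 2 (1 + 1)" using Gid_gset[of 2] by simp
  have rtop: "r \<in> topspace (tens_sum ?D ?E 2)"
    using G2 by (simp add: r_def tens_sum_def tens_index_def ptG_def)
  then have ctop: "tens_cls ?D ?E 2 r \<in> topspace (tens_top ?D ?E 2)"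
    by (simp add: tens_top_def)
  have eq: "braid ?D ?E 2 (tens_act ?D ?E 2 om (tens_cls ?D ?E 2 r))
      = tens_act ?E ?D 2 om (braid ?D ?E 2 (tens_cls ?D ?E 2 r))"
    using nat ctop om_gset unfolding braid_natural_def by auto
  have lhs: "braid ?D ?E 2 (tens_act ?D ?E 2 om (tens_cls ?D ?E 2 r))
     = tens_cls ?E ?D 2 (tens_swap 2 (actr 2 om r))"
    by (simp add: act_cls[OF _ _ om_gset] braid_cls)
  have rhs: "tens_act ?E ?D 2 om (braid ?D ?E 2 (tens_cls ?D ?E 2 r))
     = tens_cls ?E ?D 2 (actr 2 om (tens_swap 2 r))"
    by (simp add: act_cls[OF _ _ om_gset] braid_cls)
  have "inv_sp 2 (tens_swap 2 (actr 2 om r)) = inv_sp 2 (actr 2 om (tens_swap 2 r))"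
  proof -
    have "actr 2 om (tens_swap 2 r) \<in> tens_cls ?E ?D 2 (tens_swap 2 (actr 2 om r))"
      using eq lhs rhs cls_mem by metis
    then show ?thesis using inv_cls[of _ ?E ?D 2] by simp
  qed
  moreover
  have one: "(1::real) + 1 = 2" by simp
  have h1: "Gcomp 2 (Gid 2) om \<in> Gset 2 (1 + 1)"
    using Gcomp_gset[OF om_gset Gid_gset[of 2]] by simp
  have s1: "Gsplit_pt 2 1 (Gcomp 2 (Gid 2) om) = sqrt 2"
    by (rule split_pt_eq[OF h1]) (use om_sqrt om_gset gset_range in \<open>auto simp: Gcomp_val Gid_def\<close>)
  interpret k1: splitctx 2 1 1 "Gcomp 2 (Gid 2) om" by unfold_locales (use h1 in auto)
  have lv: "inv_sp 2 (tens_swap 2 (actr 2 om r)) = 2 - sqrt 2"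
    using k1.sw_split s1 k1.s_def by (simp add: r_def actr_def tens_swap_eq inv_sp_def)
  interpret k2: splitctx 2 1 1 "Gid 2" by unfold_locales (use G2 in auto)
  have s2: "Gsplit_pt 2 1 (Gid 2) = 1"
    by (rule split_pt_eq[OF G2]) (auto simp: Gid_def)
  have G: "SW 2 1 1 (Gid 2) \<in> Gset 2 (1 + 1)" using k2.sw_gset by simp
  have G1: "SW 2 1 1 (Gid 2) 1 = 1"
    using split_pt(2)[OF G, of 1] k2.sw_split s2 k2.s_def by simp
  have h2: "Gcomp 2 (SW 2 1 1 (Gid 2)) om \<in> Gset 2 (1 + 1)"
    using Gcomp_gset[OF om_gset G] by simp
  have s3: "Gsplit_pt 2 1 (Gcomp 2 (SW 2 1 1 (Gid 2)) om) = sqrt 2"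
    by (rule split_pt_eq[OF h2]) (use om_sqrt G1 in \<open>auto simp: Gcomp_val\<close>)
  have rv: "inv_sp 2 (actr 2 om (tens_swap 2 r)) = sqrt 2"
    using s3 by (simp add: r_def actr_def tens_swap_eq inv_sp_def)
  ultimately have "2 - sqrt 2 = sqrt (2::real)" using lv rv by simp
  then have "sqrt 2 = (1::real)" by simp
  then show False by simp
qed


theorem theorem4p9:
  fixes D :: "'a gspace" and E :: "'b gspace" and L :: real
  assumes "G_space D" and "G_space E" and "0 < L"
  shows "(\<forall>r\<in>topspace (tens_sum D E L).
             braid D E L (tens_cls D E L r) = tens_cls E D L (tens_swap L r))
       \<and> homeomorphic_map (tens_top D E L) (tens_top E D L) (braid D E L)
       \<and> (\<exists>(D'::'a gspace) (E'::'b gspace). G_space D' \<and> G_space E' \<and> \<not> braid_natural D' E')"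
proof -
  have 1: "\<forall>r\<in>topspace (tens_sum D E L).
             braid D E L (tens_cls D E L r) = tens_cls E D L (tens_swap L r)"
    using braid_cls[OF assms(3)] by blast
  have 2: "homeomorphic_map (tens_top D E L) (tens_top E D L) (braid D E L)"
    by (rule braid_homeo[OF assms(3)])
  have 3: "G_space (ptG (undefined::'a)) \<and> G_space (ptG (undefined::'b)) \<and>
      \<not> braid_natural (ptG (undefined::'a)) (ptG (undefined::'b))"
    using ptG_G_space[of "undefined::'a"] ptG_G_space[of "undefined::'b"] not_natural[of "undefined::'a" "undefined::'b"] by blast
  show ?thesis using 1 2 3 by blast
qed

end
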